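(* Let $M,N$ be weights of $\mathbb{R}^m,\mathbb{R}^n$, let $A\in\mathbb{R}^{m\times n}$ with $MA=AN$, and let $K\subseteq\mathbb{R}^n$ be a closed cone with $A^{[\dagger]}\circ A\circ K\subseteq K$. Then the cone $(A\circ I\circ K)^{[*]}\cap\mathcal{R}(A\circ I)$ is acute if and only if $$(A\circ I\circ K)^{[*]}\cap\mathcal{R}(A\circ I)\subseteq A\circ I\circ K.$$
   Context: A weight is a real symmetric matrix $W$ with $W^2=I$. $\mathbb{R}^m$ and $\mathbb{R}^n$ carry weights $M\in\mathbb{R}^{m\times m}$ and $N\in\mathbb{R}^{n\times n}$, respectively. The indefinite inner product on the space with weight $W$ is $[x,y]=\langle x,Wy\rangle$. Indefinite matrix product: if $B$ has $p$ columns and $C$ has $p$ rows (or is a vector in $\mathbb{R}^p$), $p\in\{m,n\}$, and $W$ is the weight of $\mathbb{R}^p$, then $B\circ C:=BWC$. $I$ denotes an identity matrix of the appropriate size. Indefinite adjoint of $B\in\mathbb{R}^{p\times q}$: $B^{[*]}:=W_qB^TW_p$, where $W_p,W_q$ are the weights of $\mathbb{R}^p,\mathbb{R}^q$. Indefinite Moore–Penrose inverse: $A^{[\dagger]}$ is the unique $X\in\mathbb{R}^{n\times m}$ such that - $A\circ X\circ A=A$, - $X\circ A\circ X=X$, - $(A\circ X)^{[*]}=A\circ X$, - $(X\circ A)^{[*]}=X\circ A$. It equals $NA^\dagger M$. Range and null space: for a matrix $B$ with $q$ columns, $\mathcal{R}(B)=\{B\circ x:x\in\mathbb{R}^q\}$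 and $\mathcal{N}(B)=\{x\in\mathbb{R}^q:B\circ x=0\}$. A cone is a nonempty set closed under addition and under multiplication by nonnegative scalars. For $S$ a subset of $\mathbb{R}^p$ with weight $W$, the dual is $S^{[*]}=\{x\in\mathbb{R}^p:[x,t]\ge0\ \forall t\in S\}$. For a matrix $B$ and a set $S$, $B\circ S=\{B\circ s:s\in S\}$. A cone $C$ is acute if $[x,y]\ge0$ for all $x,y\in C$, equivalently $C\subseteq C^{[*]}$. *)

theory Defs
  imports "HOL-Analysis.Analysis"
begin

text \<open>Matrices are \<open>real^'q^'p\<close> (p rows, q columns). A weight is a real symmetric
  involutory matrix.\<close>

definition weight :: "real^'p^'p \<Rightarrow> bool" where
  "weight W \<longleftrightarrow> transpose W = W \<and> W ** W = mat 1"

text \<open>Indefinite inner product on the space with weight W.\<close>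
definition iinner :: "real^'p^'p \<Rightarrow> real^'p \<Rightarrow> real^'p \<Rightarrow> real" where
  "iinner W x y = x \<bullet> (W *v y)"

text \<open>Indefinite products B \<circ> C = B W C, W the weight of the middle space.\<close>
definition imult :: "real^'q^'q \<Rightarrow> real^'q^'p \<Rightarrow> real^'r^'q \<Rightarrow> real^'r^'p" where
  "imult W B C = B ** W ** C"

definition imultv :: "real^'q^'q \<Rightarrow> real^'q^'p \<Rightarrow> real^'q \<Rightarrow> real^'p" where
  "imultv W B x = B *v (W *v x)"

definition imultset :: "real^'q^'q \<Rightarrow> real^'q^'p \<Rightarrow> (real^'q) set \<Rightarrow> (real^'p) set" where
  "imultset W B S = imultv W B ` S"

text \<open>Indefinite adjoint of B in R^(p x q): Wq B^T Wp.\<close>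
definition iadj :: "real^'p^'p \<Rightarrow> real^'q^'q \<Rightarrow> real^'q^'p \<Rightarrow> real^'p^'q" where
  "iadj Wp Wq B = Wq ** transpose B ** Wp"

text \<open>Indefinite Moore--Penrose inverse of A in R^(m x n), weights M of R^m, N of R^n.\<close>
definition impinv :: "real^'m^'m \<Rightarrow> real^'n^'n \<Rightarrow> real^'n^'m \<Rightarrow> real^'m^'n" where
  "impinv M N A = (THE X.
      imult M (imult N A X) A = A \<and>
      imult N (imult M X A) X = X \<and>
      iadj M M (imult N A X) = imult N A X \<and>
      iadj N N (imult M X A) = imult M X A)"

text \<open>Range of a matrix B with q columns (weight Wq of R^q).\<close>
definition irange :: "real^'q^'q \<Rightarrow> real^'q^'p \<Rightarrow> (real^'p) set" where
  "irange Wq B = {imultv Wq B x | x. True}"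

definition icone :: "('a::real_vector) set \<Rightarrow> bool" where
  "icone C \<longleftrightarrow> C \<noteq> {} \<and> (\<forall>x\<in>C. \<forall>y\<in>C. x + y \<in> C) \<and> (\<forall>x\<in>C. \<forall>c::real. c \<ge> 0 \<longrightarrow> c *\<^sub>R x \<in> C)"

definition idual :: "real^'p^'p \<Rightarrow> (real^'p) set \<Rightarrow> (real^'p) set" where
  "idual W S = {x. \<forall>t\<in>S. iinner W x t \<ge> 0}"

definition acute :: "real^'p^'p \<Rightarrow> (real^'p) set \<Rightarrow> bool" where
  "acute W C \<longleftrightarrow> (\<forall>x\<in>C. \<forall>y\<in>C. iinner W x y \<ge> 0)"

end

theory Submission
  imports Defs
begin

lemma proj_exists:
  fixes S :: "(real^'n) set"
  assumes "subspace S"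
  obtains P :: "real^'n^'n" where "transpose P = P" "\<And>x. P *v x \<in> S"
    "\<And>x. x \<in> S \<Longrightarrow> P *v x = x" "\<And>x s. s \<in> S \<Longrightarrow> (x - P *v x) \<bullet> s = 0"
proof -
  obtain B where B: "B \<subseteq> S" "pairwise orthogonal B" "\<And>x. x \<in> B \<Longrightarrow> norm x = 1"
    "independent B" "span B = S"
    using orthonormal_basis_subspace[OF assms] by metis
  have fin: "finite B" using B(4) by (simp add: independent_imp_finite)
  define P :: "real^'n^'n" where "P = (\<chi> i j. \<Sum>b\<in>B. b$i * b$j)"
  have Pv: "P *v x = (\<Sum>b\<in>B. (b \<bullet> x) *\<^sub>R b)" for x
    unfolding P_def
    by (simp add: vec_eq_iff matrix_vector_mult_def inner_vec_def sum_component
        sum_distrib_left sum_distrib_right mult_ac sum.swap[of _ B])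
  have T: "transpose P = P" unfolding P_def by (simp add: transpose_def vec_eq_iff mult.commute)
  have inS: "P *v x \<in> S" for x
    unfolding Pv B(5)[symmetric] by (intro span_sum span_mul span_base) 
  have orthB: "(x - P *v x) \<bullet> b' = 0" if "b' \<in> B" for x b'
  proof -
    have "(\<Sum>b\<in>B. (b \<bullet> x) * (b \<bullet> b')) = (b' \<bullet> x) * (b' \<bullet> b')"
    proof (rule sum.remove[OF fin that, THEN trans])
      have "(\<Sum>b\<in>B - {b'}. (b \<bullet> x) * (b \<bullet> b')) = 0"
        using B(2) that by (intro sum.neutral) (auto simp: pairwise_def orthogonal_def)
      then show "(b' \<bullet> x) * (b' \<bullet> b') + (\<Sum>b\<in>B - {b'}. (b \<bullet> x) * (b \<bullet> b')) = (b' \<bullet> x) * (b' \<bullet> b')"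
        by simp
    qed
    moreover have "b' \<bullet> b' = 1" using B(3)[OF that] by (simp add: norm_eq_1)
    moreover have "(x - P *v x) \<bullet> b' = x \<bullet> b' - (\<Sum>b\<in>B. (b \<bullet> x) * (b \<bullet> b'))"
      by (simp add: Pv inner_diff_left inner_sum_left)
    ultimately show ?thesis by (simp add: inner_commute)
  qed
  have orth: "(x - P *v x) \<bullet> s = 0" if "s \<in> S" for x s
  proof -
    have "orthogonal (x - P *v x) s"
      by (rule orthogonal_to_span[of s B]) (use that B(5) orthB in \<open>auto simp: orthogonal_def\<close>)
    then show ?thesis by (simp add: orthogonal_def)
  qed
  have fixS: "P *v x = x" if "x \<in> S" for x
  proof -
    have "x - P *v x \<in> S" using that inS assms by (simp add: subspace_diff)
    then have "(x - P *v x) \<bullet> (x - P *v x) = 0" by (rule orth)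
    then show ?thesis by simp
  qed
  show thesis using that T inS fixS orth by blast
qed

lemma subspace_range_mv: "subspace (range (\<lambda>z. (B::real^'a^'b) *v z))"
  unfolding subspace_def
proof (intro conjI ballI allI)
  show "0 \<in> range (\<lambda>z. B *v z)" by (rule range_eqI[of _ _ 0]) simp
  fix x y assume "x \<in> range (\<lambda>z. B *v z)" "y \<in> range (\<lambda>z. B *v z)"
  then obtain a b where ab: "x = B *v a" "y = B *v b" by blast
  show "x + y \<in> range (\<lambda>z. B *v z)"
    by (rule range_eqI[of _ _ "a + b"]) (simp add: ab matrix_vector_right_distrib)
next
  fix c :: real and x assume "x \<in> range (\<lambda>z. B *v z)"
  then obtain a where a: "x = B *v a" by blast
  show "c *\<^sub>R x \<in> range (\<lambda>z. B *v z)"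
    by (rule range_eqI[of _ _ "c *\<^sub>R a"]) (simp add: a matrix_vector_mult_scaleR)
qed

lemma penrose_exists:
  fixes A :: "real^'n^'m"
  shows "\<exists>Y :: real^'m^'n. A ** Y ** A = A \<and> Y ** A ** Y = Y \<and>
           transpose (A ** Y) = A ** Y \<and> transpose (Y ** A) = Y ** A"
proof -
  define R where "R = range (\<lambda>z. transpose A *v z)"
  define RA where "RA = range (\<lambda>z. A *v z)"
  have sR: "subspace R" unfolding R_def
    by (rule subspace_range_mv)
  have sRA: "subspace RA" unfolding RA_def
    by (rule subspace_range_mv)
  obtain P where P: "transpose P = P" "\<And>x. P *v x \<in> R"
    "\<And>x. x \<in> R \<Longrightarrow> P *v x = x" "\<And>x s. s \<in> R \<Longrightarrow> (x - P *v x) \<bullet> s = 0"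
    using proj_exists[OF sR] by metis
  obtain Q where Q: "transpose Q = Q" "\<And>x. Q *v x \<in> RA"
    "\<And>x. x \<in> RA \<Longrightarrow> Q *v x = x"
    using proj_exists[OF sRA] by metis
  have kerR: "x = 0" if xR: "x \<in> R" and Ax0: "A *v x = 0" for x
  proof -
    obtain z where z: "x = transpose A *v z" using xR unfolding R_def by blast
    have "x \<bullet> x = z \<bullet> (A *v x)"
      by (simp add: z dot_lmul_matrix[symmetric])
    then show ?thesis using Ax0 by simp
  qed
  have perpker: "A *v v = 0" if "\<And>s. s \<in> R \<Longrightarrow> v \<bullet> s = 0" for v
  proof -
    have "v \<bullet> (transpose A *v (A *v v)) = 0" using that unfolding R_def by auto
    moreover have "((A *v v) v* A) \<bullet> v = (A *v v) \<bullet> (A *v v)" by (rule dot_lmul_matrix)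
    ultimately have "(A *v v) \<bullet> (A *v v) = 0"
      by (simp add: inner_commute)
    then show ?thesis by simp
  qed
  have AP: "A *v (P *v x) = A *v x" for x
  proof -
    have "A *v (x - P *v x) = 0" using P(4) by (intro perpker) auto
    then show ?thesis by (simp add: matrix_vector_mult_diff_distrib)
  qed
  have uniq: "u = v" if "u \<in> R" "v \<in> R" "A *v u = A *v v" for u v
  proof -
    have "u - v \<in> R" using that sR by (simp add: subspace_diff)
    moreover have "A *v (u - v) = 0" using that by (simp add: matrix_vector_mult_diff_distrib)
    ultimately show ?thesis using kerR by fastforce
  qed
  define F where "F = (\<lambda>x::real^'n. (A *v x, x - P *v x))"
  have linF: "linear F" unfolding F_def
    by (auto simp: linear_iff matrix_vector_right_distrib matrix_vector_mult_scaleR algebra_simps)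
  have injF: "inj F"
  proof (rule injI)
    fix x y assume "F x = F y"
    then have 1: "A *v x = A *v y" and 2: "x - P *v x = y - P *v y" by (auto simp: F_def)
    have "x - y = P *v x - P *v y" using 2 by (simp add: algebra_simps)
    also have "\<dots> = P *v (x - y)" by (simp add: matrix_vector_mult_diff_distrib)
    finally have "x - y \<in> R" using P(2) by metis
    moreover have "A *v (x - y) = 0" using 1 by (simp add: matrix_vector_mult_diff_distrib)
    ultimately show "x = y" using kerR by fastforce
  qed
  obtain G where G: "linear G" "G \<circ> F = id"
    using linear_injective_left_inverse[OF linF injF] by blast
  define Yf where "Yf = (\<lambda>y. G (Q *v y, 0::real^'n))"
  have linY: "linear Yf" unfolding Yf_def
  proof (rule linear_compose[OF _ G(1), unfolded o_def])
    show "linear (\<lambda>y. (Q *v y, 0::real^'n))"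
      by (auto simp: linear_iff matrix_vector_right_distrib matrix_vector_mult_scaleR)
  qed
  have key: "Yf y \<in> R \<and> A *v Yf y = Q *v y" for y
  proof -
    obtain x0 where x0: "Q *v y = A *v x0" using Q(2)[of y] unfolding RA_def by auto
    define x where "x = P *v x0"
    have xR: "x \<in> R" unfolding x_def by (rule P(2))
    have Ax: "A *v x = Q *v y" using AP x0 x_def by simp
    have "F x = (Q *v y, 0)" using Ax P(3)[OF xR] by (simp add: F_def)
    then have "Yf y = x" unfolding Yf_def using G(2) by (metis comp_apply id_apply)
    then show ?thesis using xR Ax by simp
  qed
  define Y where "Y = matrix Yf"
  have Yv: "Y *v y = Yf y" for y unfolding Y_def using matrix_vector_mul(2)[OF linY] by metis
  have QA: "Q *v (A *v x) = A *v x" for x using Q(3) unfolding RA_def by auto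
  have e1: "A ** Y ** A = A"
    unfolding matrix_eq by (simp add: matrix_vector_mul_assoc[symmetric] Yv key QA)
  have e2: "Y ** A ** Y = Y"
  proof (unfold matrix_eq, intro allI)
    fix y
    have "Yf (A *v Yf y) = Yf y"
      by (metis uniq key QA)
    then show "Y ** A ** Y *v y = Y *v y" by (simp add: matrix_vector_mul_assoc[symmetric] Yv)
  qed
  have e3: "A ** Y = Q"
    unfolding matrix_eq by (simp add: matrix_vector_mul_assoc[symmetric] Yv key)
  have e4: "Y ** A = P"
  proof (unfold matrix_eq, intro allI)
    fix x
    have "Yf (A *v x) = P *v x"
      using key[of "A *v x"] QA AP P(2) by (intro uniq) auto
    then show "Y ** A *v x = P *v x" by (simp add: matrix_vector_mul_assoc[symmetric] Yv)
  qed
  show ?thesis using e1 e2 e3 e4 P(1) Q(1) by metis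
qed

definition pen :: "real^'n^'m \<Rightarrow> real^'m^'n \<Rightarrow> bool" where
  "pen A Y \<longleftrightarrow> A ** Y ** A = A \<and> Y ** A ** Y = Y \<and>
           transpose (A ** Y) = A ** Y \<and> transpose (Y ** A) = Y ** A"

lemma penrose_unique:
  assumes "pen A Y" "pen A Z"
  shows "Y = Z"
proof -
  have y1: "A ** Y ** A = A" and y2: "Y ** A ** Y = Y" and y3: "transpose (A ** Y) = A ** Y"
    and y4: "transpose (Y ** A) = Y ** A" using assms(1) unfolding pen_def by auto
  have z1: "A ** Z ** A = A" and z2: "Z ** A ** Z = Z" and z3: "transpose (A ** Z) = A ** Z"
    and z4: "transpose (Z ** A) = Z ** A" using assms(2) unfolding pen_def by auto
  have TA1: "transpose A = transpose A ** (A ** Z)"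
    by (metis z1 z3 matrix_transpose_mul)
  have TA2: "transpose A = Y ** A ** transpose A"
    by (metis y1 y4 matrix_transpose_mul matrix_mul_assoc)
  have "Y = Y ** transpose (A ** Y)" using y2 y3 by (metis matrix_mul_assoc)
  also have "\<dots> = Y ** (transpose Y ** transpose A)" by (simp add: matrix_transpose_mul)
  also have "\<dots> = Y ** (transpose Y ** (transpose A ** (A ** Z)))" using TA1 by metis
  also have "\<dots> = Y ** (transpose (A ** Y) ** (A ** Z))" by (simp add: matrix_transpose_mul matrix_mul_assoc)
  also have "\<dots> = (Y ** A ** Y) ** A ** Z" using y3 by (simp add: matrix_mul_assoc)
  finally have Y: "Y = Y ** A ** Z" using y2 by simp
  have "Z = transpose (Z ** A) ** Z" using z2 z4 by metis
  also have "\<dots> = transpose A ** transpose Z ** Z" by (simp add: matrix_transpose_mul)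
  also have "\<dots> = Y ** A ** transpose A ** transpose Z ** Z" using TA2 by metis
  also have "\<dots> = Y ** A ** (transpose (Z ** A) ** Z)" by (simp add: matrix_transpose_mul matrix_mul_assoc)
  also have "\<dots> = Y ** A ** (Z ** A ** Z)" using z4 by simp
  finally have "Z = Y ** A ** Z" using z2 by simp
  with Y show ?thesis by simp
qed

lemma weighted_iff_pen:
  fixes M :: "real^'m^'m" and N :: "real^'n^'n" and A :: "real^'n^'m" and X :: "real^'m^'n"
  assumes "weight M" "weight N"
  shows "(imult M (imult N A X) A = A \<and>
      imult N (imult M X A) X = X \<and>
      iadj M M (imult N A X) = imult N A X \<and>
      iadj N N (imult M X A) = imult M X A) \<longleftrightarrow> pen A (N ** X ** M)"
proof -
  have TM: "transpose M = M" and MM: "M ** M = mat 1" using assms(1) unfolding weight_def by auto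
  have TN: "transpose N = N" and NN: "N ** N = mat 1" using assms(2) unfolding weight_def by auto
  have MM': "B ** M ** M = B" for B :: "real^'m^'n"
    by (metis MM matrix_mul_assoc matrix_mul_rid)
  have MM'': "B ** M ** M = B" for B :: "real^'m^'m"
    by (metis MM matrix_mul_assoc matrix_mul_rid)
  have NN': "B ** N ** N = B" for B :: "real^'n^'m"
    by (metis NN matrix_mul_assoc matrix_mul_rid)
  have NN'': "B ** N ** N = B" for B :: "real^'n^'n"
    by (metis NN matrix_mul_assoc matrix_mul_rid)
  note simps = imult_def iadj_def pen_def matrix_mul_assoc matrix_transpose_mul TM TN MM NN MM' MM'' NN' NN''
  have e1: "imult M (imult N A X) A = A \<longleftrightarrow> A ** (N ** X ** M) ** A = A"
    by (simp add: simps)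
  have e2: "imult N (imult M X A) X = X \<longleftrightarrow> (N ** X ** M) ** A ** (N ** X ** M) = N ** X ** M"
  proof
    assume "imult N (imult M X A) X = X"
    then have "X ** M ** A ** N ** X = X" by (simp add: simps)
    then have "N ** (X ** M ** A ** N ** X) ** M = N ** X ** M" by simp
    then show "(N ** X ** M) ** A ** (N ** X ** M) = N ** X ** M" by (simp add: simps)
  next
    assume "(N ** X ** M) ** A ** (N ** X ** M) = N ** X ** M"
    then have "N ** ((N ** X ** M) ** A ** (N ** X ** M)) ** M = N ** (N ** X ** M) ** M" by simp
    then show "imult N (imult M X A) X = X" by (simp add: simps)
  qed
  have e3: "iadj M M (imult N A X) = imult N A X \<longleftrightarrow> transpose (A ** (N ** X ** M)) = A ** (N ** X ** M)"
  proof
    assume "iadj M M (imult N A X) = imult N A X"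
    then have "iadj M M (imult N A X) ** M = imult N A X ** M" by simp
    then show "transpose (A ** (N ** X ** M)) = A ** (N ** X ** M)" by (simp add: simps)
  next
    assume "transpose (A ** (N ** X ** M)) = A ** (N ** X ** M)"
    then have "transpose (A ** (N ** X ** M)) ** M = A ** (N ** X ** M) ** M" by simp
    then show "iadj M M (imult N A X) = imult N A X" by (simp add: simps)
  qed
  have e4: "iadj N N (imult M X A) = imult M X A \<longleftrightarrow> transpose ((N ** X ** M) ** A) = (N ** X ** M) ** A"
  proof
    assume "iadj N N (imult M X A) = imult M X A"
    then have "N ** iadj N N (imult M X A) = N ** imult M X A" by simp
    then show "transpose ((N ** X ** M) ** A) = (N ** X ** M) ** A" by (simp add: simps)
  next
    assume "transpose ((N ** X ** M) ** A) = (N ** X ** M) ** A"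
    then have "N ** transpose ((N ** X ** M) ** A) = N ** ((N ** X ** M) ** A)" by simp
    then show "iadj N N (imult M X A) = imult M X A" by (simp add: simps)
  qed
  show ?thesis using e1 e2 e3 e4 unfolding pen_def by blast
qed

lemma impinv_props:
  fixes M :: "real^'m^'m" and N :: "real^'n^'n" and A :: "real^'n^'m"
  assumes "weight M" "weight N"
  shows "imult M (imult N A (impinv M N A)) A = A \<and>
      imult N (imult M (impinv M N A) A) (impinv M N A) = impinv M N A \<and>
      iadj M M (imult N A (impinv M N A)) = imult N A (impinv M N A) \<and>
      iadj N N (imult M (impinv M N A) A) = imult M (impinv M N A) A"
proof -
  have MM: "M ** M = mat 1" using assms(1) unfolding weight_def by auto
  have NN: "N ** N = mat 1" using assms(2) unfolding weight_def by auto
  have bk: "N ** (N ** X ** M) ** M = X" for X :: "real^'m^'n"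
    by (simp add: matrix_mul_assoc NN) (metis MM matrix_mul_assoc matrix_mul_rid)
  obtain Y where Y: "pen A Y" using penrose_exists[of A] unfolding pen_def by blast
  show ?thesis unfolding impinv_def
  proof (rule theI')
    show "\<exists>!X. imult M (imult N A X) A = A \<and> imult N (imult M X A) X = X \<and>
      iadj M M (imult N A X) = imult N A X \<and> iadj N N (imult M X A) = imult M X A"
      unfolding weighted_iff_pen[OF assms]
    proof (rule ex1I[of _ "N ** Y ** M"])
      show "pen A (N ** (N ** Y ** M) ** M)" using bk Y by simp
    next
      fix X assume "pen A (N ** X ** M)"
      then have "N ** X ** M = Y" using Y penrose_unique by blast
      then show "X = N ** Y ** M" using bk by metis
    qed
  qed
qed

theorem lemma3p10:
  fixes M :: "real^'m^'m" and N :: "real^'n^'n" and A :: "real^'n^'m"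
    and K :: "(real^'n) set"
  assumes "weight M" and "weight N" and "M ** A = A ** N"
    and "icone K" and "closed K"
    and "imultset N (imult M (impinv M N A) A) K \<subseteq> K"
  shows "acute M (idual M (imultset N (imult N A (mat 1)) K) \<inter> irange N (imult N A (mat 1)))
     \<longleftrightarrow> idual M (imultset N (imult N A (mat 1)) K) \<inter> irange N (imult N A (mat 1))
          \<subseteq> imultset N (imult N A (mat 1)) K"
proof -
  have TM: "transpose M = M" and MM: "M ** M = mat 1" using assms(1) unfolding weight_def by auto
  have TN: "transpose N = N" and NN: "N ** N = mat 1" using assms(2) unfolding weight_def by auto
  have MA: "M ** A = A ** N" by fact
  have imv: "imultv N (imult N A (mat 1)) x = A *v x" for x
    by (simp add: imultv_def imult_def matrix_vector_mul_assoc) (metis NN matrix_mul_assoc matrix_mul_rid)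
  define C where "C = (\<lambda>x. A *v x) ` K"
  have Ceq: "imultset N (imult N A (mat 1)) K = C"
    unfolding imultset_def C_def using imv by (simp add: image_def)
  have Req: "irange N (imult N A (mat 1)) = range (\<lambda>x. A *v x)"
    unfolding irange_def using imv by auto
  have Kne: "K \<noteq> {}" and Kadd: "\<And>x y. x \<in> K \<Longrightarrow> y \<in> K \<Longrightarrow> x + y \<in> K"
    and Ksc: "\<And>x c. x \<in> K \<Longrightarrow> c \<ge> 0 \<Longrightarrow> c *\<^sub>R x \<in> K"
    using assms(4) unfolding icone_def by auto
  have Cadd: "x + y \<in> C" if "x \<in> C" "y \<in> C" for x y
    using that Kadd unfolding C_def by (auto simp: matrix_vector_right_distrib[symmetric])
  have Csc: "c *\<^sub>R x \<in> C" if "x \<in> C" "c \<ge> 0" for x c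
    using that Ksc unfolding C_def by (auto simp: matrix_vector_mult_scaleR[symmetric])
  have Cne: "C \<noteq> {}" using Kne unfolding C_def by auto
  have convK: "convex K" unfolding convex_def using Kadd Ksc by auto
  have convC: "convex C" unfolding C_def
    by (rule convex_linear_image[OF matrix_vector_mul_linear convK])
  \<comment> \<open>closedness of C\<close>
  define X where "X = impinv M N A"
  have c1: "A ** N ** X ** M ** A = A" and c2: "X ** M ** A ** N ** X = X"
    using impinv_props[OF assms(1,2), of A] unfolding X_def imult_def by auto
  define Pp where "Pp = X ** M ** A ** N"
  have PK: "Pp *v k \<in> K" if "k \<in> K" for k
  proof -
    have "imultv N (imult M X A) k \<in> K" using assms(6) that unfolding imultset_def X_def by auto
    then show ?thesis by (simp add: imultv_def imult_def Pp_def matrix_vector_mul_assoc)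
  qed
  have "M ** (A ** X ** A) ** N = A"
    using c1 MA by (metis matrix_mul_assoc)
  then have "M ** (M ** (A ** X ** A) ** N) ** N = M ** A ** N" by simp
  then have AXA: "A ** X ** A = A"
    by (simp add: matrix_mul_assoc MM MA) (metis NN matrix_mul_assoc matrix_mul_rid)
  have APp: "A ** Pp = A"
    unfolding Pp_def by (metis AXA MA NN matrix_mul_assoc matrix_mul_rid)
  have PPp: "Pp ** Pp = Pp" unfolding Pp_def by (metis c2 matrix_mul_assoc)
  have APv: "A *v (Pp *v x) = A *v x" for x using APp by (simp add: matrix_vector_mul_assoc)
  have PPv: "Pp *v (Pp *v x) = Pp *v x" for x using PPp by (simp add: matrix_vector_mul_assoc)
  have injS: "x = 0" if "Pp *v x = x" "A *v x = 0" for x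
  proof -
    have "(A ** N) *v x = 0" using that(2) MA by (metis matrix_vector_mul_assoc matrix_vector_mult_0_right)
    then have "Pp *v x = 0" unfolding Pp_def by (metis matrix_vector_mul_assoc matrix_vector_mult_0_right)
    then show ?thesis using that(1) by simp
  qed
  define T where "T = K \<inter> {x. Pp *v x = x}"
  have contPp: "continuous_on UNIV (\<lambda>x. Pp *v x)"
    by (intro linear_continuous_on matrix_vector_mul_linear[THEN linear_linear[THEN iffD2]])
  have clT: "closed T" unfolding T_def
    by (intro closed_Int assms(5) closed_Collect_eq contPp continuous_on_id)
  have CT: "C = (\<lambda>x. A *v x) ` T"
  proof
    show "C \<subseteq> (\<lambda>x. A *v x) ` T"
    proof
      fix c assume "c \<in> C"
      then obtain k where k: "k \<in> K" "c = A *v k" unfolding C_def by auto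
      show "c \<in> (\<lambda>x. A *v x) ` T"
        by (rule image_eqI[of _ _ "Pp *v k"]) (use k PK PPv APv in \<open>auto simp: T_def\<close>)
    qed
    show "(\<lambda>x. A *v x) ` T \<subseteq> C" unfolding T_def C_def by auto
  qed
  define F where "F = (\<lambda>x::real^'n. (A *v x, x - Pp *v x))"
  have linF: "linear F" unfolding F_def
    by (auto simp: linear_iff matrix_vector_right_distrib matrix_vector_mult_scaleR algebra_simps)
  have injF: "inj F"
  proof (rule injI)
    fix x y assume "F x = F y"
    then have 1: "A *v x = A *v y" and 2: "x - Pp *v x = y - Pp *v y" by (auto simp: F_def)
    have "x - y = Pp *v x - Pp *v y" using 2 by (simp add: algebra_simps)
    also have "\<dots> = Pp *v (x - y)" by (simp add: matrix_vector_mult_diff_distrib)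
    finally have "Pp *v (x - y) = x - y" by simp
    moreover have "A *v (x - y) = 0" using 1 by (simp add: matrix_vector_mult_diff_distrib)
    ultimately show "x = y" using injS by fastforce
  qed
  have clFT: "closed (F ` T)" by (rule closed_injective_linear_image[OF clT linF injF])
  have CF: "C = (\<lambda>y. (y, 0::real^'n)) -` (F ` T)"
  proof
    show "C \<subseteq> (\<lambda>y. (y, 0::real^'n)) -` (F ` T)"
      unfolding CT F_def T_def by auto
    show "(\<lambda>y. (y, 0::real^'n)) -` (F ` T) \<subseteq> C"
      unfolding CT F_def T_def by auto
  qed
  have clC: "closed C" unfolding CF
    by (intro continuous_closed_vimage clFT continuous_intros)
  \<comment> \<open>main argument\<close>
  have MMv: "M *v (M *v x) = x" for x by (simp add: matrix_vector_mul_assoc MM)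
  have inMM: "(M *v a) \<bullet> (M *v b) = a \<bullet> b" for a b
  proof -
    have "M *v a = a v* M" by (metis TM transpose_matrix_vector)
    then show ?thesis by (simp add: dot_lmul_matrix MMv)
  qed
  define D where "D = idual M C \<inter> range (\<lambda>x. A *v x)"
  have "acute M D \<longleftrightarrow> D \<subseteq> C"
  proof
    assume ac: "acute M D"
    show "D \<subseteq> C"
    proof
      fix y assume yD: "y \<in> D"
      show "y \<in> C"
      proof (rule ccontr)
        assume yC: "y \<notin> C"
        define c0 where "c0 = closest_point C y"
        have c0C: "c0 \<in> C" unfolding c0_def by (rule closest_point_in_set[OF clC Cne])
        have cl: "\<forall>z\<in>C. dist y c0 \<le> dist y z"
          unfolding c0_def using closest_point_exists(2)[OF clC Cne] by blast
        have dot: "(y - c0) \<bullet> (z - c0) \<le> 0" if "z \<in> C" for z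
          by (rule any_closest_point_dot[OF convC clC c0C that cl])
        have zero: "0 \<in> C" using Csc[OF c0C, of 0] by simp
        have "(y - c0) \<bullet> (0 - c0) \<le> 0" by (rule dot[OF zero])
        moreover have "(y - c0) \<bullet> (2 *\<^sub>R c0 - c0) \<le> 0" by (rule dot[OF Csc[OF c0C]]) simp
        ultimately have orth0: "(y - c0) \<bullet> c0 = 0" by (simp add: inner_diff_right)
        have wC: "(c0 - y) \<bullet> z \<ge> 0" if "z \<in> C" for z
        proof -
          have "(y - c0) \<bullet> ((z + c0) - c0) \<le> 0" by (rule dot[OF Cadd[OF that c0C]])
          then show ?thesis by (simp add: inner_diff_left inner_diff_right)
        qed
        define w where "w = c0 - y"
        have wne: "w \<noteq> 0" using yC c0C unfolding w_def by auto
        have wy: "w \<bullet> y < 0"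
        proof -
          have "w \<bullet> y = - (w \<bullet> w)" using orth0 unfolding w_def
            by (simp add: inner_diff_left inner_diff_right inner_commute)
          then show ?thesis using wne by simp
        qed
        have yR: "y \<in> range (\<lambda>x. A *v x)" using yD unfolding D_def by auto
        obtain a b where ab: "c0 = A *v a" "y = A *v b" using c0C yR unfolding C_def by auto
        have "M *v w = A *v (N *v (a - b))"
          unfolding w_def ab by (simp add: matrix_vector_mul_assoc MA matrix_vector_mult_diff_distrib)
        then have uR: "M *v w \<in> range (\<lambda>x. A *v x)" by auto
        have uC: "M *v w \<in> idual M C"
          unfolding idual_def iinner_def using wC inMM unfolding w_def by auto
        have "M *v w \<in> D" using uR uC unfolding D_def by auto
        then have "iinner M y (M *v w) \<ge> 0" using ac yD unfolding acute_def by auto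
        then show False using wy MMv by (simp add: iinner_def inner_commute)
      qed
    qed
  next
    assume sub: "D \<subseteq> C"
    show "acute M D" unfolding acute_def
    proof (intro ballI)
      fix x y assume "x \<in> D" "y \<in> D"
      then show "iinner M x y \<ge> 0" using sub unfolding D_def idual_def by auto
    qed
  qed
  then show ?thesis unfolding Ceq Req D_def .
qed

end
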